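(* Let $G$ be a group, $H$ a finite index normal subgroup of $G$, $K$ a normal subgroup of $G$, and $g\in H$. Suppose $g$ has a minimal root $a$ in $G$ with respect to $K$, and let $\psi:G\to G/H$ be the quotient map. Then \[\nu(g;H,K\cap H)\ge \frac{\nu(g;G,K)}{o(\psi(a),G/H)}.\]
   Context: For a group $G$, a normal subgroup $K$ and $g\in G$, with $\pi:G\to G/K$ the quotient map: if $g\in K$, $\nu(g;G,K)$ is the supremum of the orders $o(\pi(a),G/K)$ over all $a\in G$ with $a^n=g$ for some integer $n$; if $g\notin K$, $\nu(g;G,K)$ is the supremum of all non-zero integers $n$ such that $g=a^n$ for some $a\in G$. When $\nu(g;G,K)$ is finite, a minimal root of $g$ in $G$ with respect to $K$ is an element $a\in G$ attaining this supremum (i.e. $a^n=g$ for some $n$ and $o(\pi(a),G/K)=\nu(g;G,K)$ if $g\in K$; $a^{\nu(g;G,K)}=g$ if $g\notin K$). $\nu(g;H,K\cap H)$ is defined in the same way inside $H$. $o(x,Q)$ denotes the order of $x$ in the group $Q$. *)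

theory Defs
  imports "HOL-Algebra.Algebra" "HOL-Library.Extended_Real"
begin

text \<open>Order of an element as an extended real: infinite order is \<infinity>
  (group.ord returns 0 in that case).\<close>
definition ord_e :: "('a, 'b) monoid_scheme \<Rightarrow> 'a \<Rightarrow> ereal" where
  "ord_e G x = (if group.ord G x = 0 then \<infinity> else ereal (real (group.ord G x)))"

text \<open>\<nu>(g;G,K), with \<pi>(a) = K #> a in G Mod K.\<close>
definition nu :: "('a, 'b) monoid_scheme \<Rightarrow> 'a set \<Rightarrow> 'a \<Rightarrow> ereal" where
  "nu G K g =
     (if g \<in> K
      then Sup {ord_e (G Mod K) (K #>\<^bsub>G\<^esub> a) | a. a \<in> carrier G \<and> (\<exists>n::int. a [^]\<^bsub>G\<^esub> n = g)}
      else Sup {ereal (real_of_int n) | n::int. n \<noteq> 0 \<and> (\<exists>a\<in>carrier G. a [^]\<^bsub>G\<^esub> n = g)})"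

definition min_root :: "('a, 'b) monoid_scheme \<Rightarrow> 'a set \<Rightarrow> 'a \<Rightarrow> 'a \<Rightarrow> bool" where
  "min_root G K g a \<longleftrightarrow>
     a \<in> carrier G \<and> \<bar>nu G K g\<bar> \<noteq> \<infinity> \<and>
     (if g \<in> K
      then (\<exists>n::int. a [^]\<^bsub>G\<^esub> n = g) \<and> ord_e (G Mod K) (K #>\<^bsub>G\<^esub> a) = nu G K g
      else (\<exists>n::int. ereal (real_of_int n) = nu G K g \<and> a [^]\<^bsub>G\<^esub> n = g))"

end

theory Submission
  imports Defs
begin

lemma coset_pow_nat:
  assumes "N \<lhd> G" "x \<in> carrier G"
  shows "(N #>\<^bsub>G\<^esub> x) [^]\<^bsub>G Mod N\<^esub> (k::nat) = N #>\<^bsub>G\<^esub> (x [^]\<^bsub>G\<^esub> k)"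
proof -
  interpret normal N G by fact
  show ?thesis
    using hom_nat_pow[OF r_coset_hom_Mod assms(2) is_group factorgroup_is_group] by simp
qed

lemma coset_pow_int:
  assumes "N \<lhd> G" "x \<in> carrier G"
  shows "(N #>\<^bsub>G\<^esub> x) [^]\<^bsub>G Mod N\<^esub> (k::int) = N #>\<^bsub>G\<^esub> (x [^]\<^bsub>G\<^esub> k)"
proof -
  interpret normal N G by fact
  show ?thesis
    using hom_int_pow[OF r_coset_hom_Mod assms(2) is_group factorgroup_is_group] by simp
qed

lemma coset_eq_self:
  assumes "N \<lhd> G" "y \<in> carrier G"
  shows "N #>\<^bsub>G\<^esub> y = N \<longleftrightarrow> y \<in> N"
proof -
  interpret normal N G by fact
  show ?thesis
    by (metis assms(2) is_group rcos_const rcos_self subgroup_axioms)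
qed

theorem mainTheorem13:
  fixes G :: "('a, 'b) monoid_scheme" and H K :: "'a set" and g a :: 'a
  assumes "group G"
    and "H \<lhd> G"
    and "finite (carrier (G Mod H))"
    and "K \<lhd> G"
    and "g \<in> H"
    and "min_root G K g a"
  shows "nu (G\<lparr>carrier := H\<rparr>) (K \<inter> H) g \<ge> nu G K g / ord_e (G Mod H) (H #>\<^bsub>G\<^esub> a)"
proof -
  interpret G: group G by fact
  interpret NH: normal H G by fact
  interpret NK: normal K G by fact
  define HH where "HH = G\<lparr>carrier := H\<rparr>"
  define L where "L = K \<inter> H"
  have HHg: "group HH" unfolding HH_def using G.subgroup_imp_group NH.subgroup_axioms by blast
  have LN: "L \<lhd> HH" unfolding L_def HH_def using G.normal_Int_subgroup NH.subgroup_axioms assms(4) by blast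
  interpret GH: group "G Mod H" by (rule NH.factorgroup_is_group)
  interpret GK: group "G Mod K" by (rule NK.factorgroup_is_group)
  interpret HL: group "HH Mod L" using LN normal.factorgroup_is_group by blast
  have a: "a \<in> carrier G" using assms(6) unfolding min_root_def by blast
  obtain n :: int where n: "a [^]\<^bsub>G\<^esub> n = g"
    using assms(6) unfolding min_root_def by (auto split: if_splits)
  have Ha: "H #>\<^bsub>G\<^esub> a \<in> carrier (G Mod H)"
    using a unfolding FactGroup_def RCOSETS_def by auto
  define m where "m = GH.ord (H #>\<^bsub>G\<^esub> a)"
  have m1: "m \<ge> 1" unfolding m_def using GH.ord_ge_1[OF assms(3) Ha] .
  have ordm: "ord_e (G Mod H) (H #>\<^bsub>G\<^esub> a) = ereal (real m)"
    using m1 unfolding ord_e_def m_def by simp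
  have gc: "g \<in> carrier G" using assms(5) NH.subset by blast
  have "(H #>\<^bsub>G\<^esub> a) [^]\<^bsub>G Mod H\<^esub> n = \<one>\<^bsub>G Mod H\<^esub>"
    using coset_pow_int[OF assms(2) a, of n] n coset_eq_self[OF assms(2) gc] assms(5) by simp
  then have "int m dvd n" using GH.int_pow_eq_id[OF Ha] m_def by simp
  then obtain k where k: "n = int m * k" by blast
  define b where "b = a [^]\<^bsub>G\<^esub> m"
  have bc: "b \<in> carrier G" unfolding b_def using a by simp
  have "(H #>\<^bsub>G\<^esub> a) [^]\<^bsub>G Mod H\<^esub> m = \<one>\<^bsub>G Mod H\<^esub>"
    unfolding m_def using Ha by simp
  then have bH: "b \<in> H"
    using coset_pow_nat[OF assms(2) a, of m] coset_eq_self[OF assms(2) bc] b_def by simp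
  have bk: "b [^]\<^bsub>HH\<^esub> k = g"
  proof -
    have "b [^]\<^bsub>G\<^esub> k = g"
      unfolding b_def using G.int_pow_pow[OF a, of "int m" k] n k a
      by (metis int_pow_int)
    then show ?thesis unfolding HH_def using G.int_pow_consistent[OF NH.subgroup_axioms bH] by simp
  qed
  show ?thesis
  proof (cases "g \<in> K")
    case True
    then have gL: "g \<in> L" unfolding L_def using assms(5) by blast
    define oo where "oo = GK.ord (K #>\<^bsub>G\<^esub> a)"
    have nuG: "nu G K g = ord_e (G Mod K) (K #>\<^bsub>G\<^esub> a)"
      using assms(6) True unfolding min_root_def by auto
    have o0: "oo \<noteq> 0" using assms(6) nuG unfolding min_root_def ord_e_def oo_def by (auto split: if_splits)
    have nuGo: "nu G K g = ereal (real oo)" using nuG o0 unfolding ord_e_def oo_def by simp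
    have Lb: "L #>\<^bsub>HH\<^esub> b \<in> carrier (HH Mod L)"
      using bH unfolding FactGroup_def RCOSETS_def HH_def by auto
    define d where "d = HL.ord (L #>\<^bsub>HH\<^esub> b)"
    have le: "ord_e (HH Mod L) (L #>\<^bsub>HH\<^esub> b) \<le> nu HH L g"
      unfolding nu_def using gL bH bk by (auto intro!: Sup_upper simp: HH_def)
    have "nu G K g / ord_e (G Mod H) (H #>\<^bsub>G\<^esub> a) \<le> ord_e (HH Mod L) (L #>\<^bsub>HH\<^esub> b)"
    proof (cases "d = 0")
      case True
      then show ?thesis unfolding ord_e_def d_def by simp
    next
      case False
      have "(L #>\<^bsub>HH\<^esub> b) [^]\<^bsub>HH Mod L\<^esub> d = \<one>\<^bsub>HH Mod L\<^esub>"
        unfolding d_def using Lb by simp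
      moreover have bHH: "b \<in> carrier HH" using bH HH_def by simp
      ultimately have "b [^]\<^bsub>HH\<^esub> d \<in> L"
        using coset_pow_nat[OF LN bHH, of d] coset_eq_self[OF LN, of "b [^]\<^bsub>HH\<^esub> d"]
          monoid.nat_pow_closed[OF group.is_monoid[OF HHg] bHH] by simp
      then have "b [^]\<^bsub>G\<^esub> d \<in> K" unfolding L_def HH_def
        using G.nat_pow_consistent by (metis IntD1)
      then have "a [^]\<^bsub>G\<^esub> (m * d) \<in> K" unfolding b_def using a G.nat_pow_pow by metis
      then have "(K #>\<^bsub>G\<^esub> a) [^]\<^bsub>G Mod K\<^esub> (m*d) = \<one>\<^bsub>G Mod K\<^esub>"
        using coset_pow_nat[OF assms(4) a, of "m*d"] coset_eq_self[OF assms(4), of "a [^]\<^bsub>G\<^esub> (m * d)"] a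
        by simp
      moreover have "K #>\<^bsub>G\<^esub> a \<in> carrier (G Mod K)"
        using a unfolding FactGroup_def RCOSETS_def by auto
      ultimately have "oo dvd m * d" unfolding oo_def using GK.pow_eq_id by blast
      then have "oo \<le> m * d" using False m1 by (simp add: dvd_imp_le)
      then have "real oo \<le> real m * real d" by (metis of_nat_le_iff of_nat_mult)
      then have "real oo / real m \<le> real d" using m1
        by (simp add: divide_le_eq mult.commute)
      moreover have "ord_e (HH Mod L) (L #>\<^bsub>HH\<^esub> b) = ereal (real d)"
        using False unfolding ord_e_def d_def by simp
      ultimately show ?thesis using nuGo ordm m1 by simp
    qed
    then show ?thesis using le unfolding HH_def L_def by simp
  next
    case False
    then have gL: "g \<notin> L" unfolding L_def by blast
    obtain n' :: int where n': "ereal n' = nu G K g" "a [^]\<^bsub>G\<^esub> n' = g"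
      using assms(6) False unfolding min_root_def by auto
    have gle: "ereal (real_of_int j) \<le> nu HH L g" if "j \<noteq> 0" "c \<in> H" "c [^]\<^bsub>HH\<^esub> j = g" for j c
      unfolding nu_def using gL that by (auto intro!: Sup_upper simp: HH_def)
    have "nu G K g / ord_e (G Mod H) (H #>\<^bsub>G\<^esub> a) \<le> nu HH L g"
    proof -
      have "(H #>\<^bsub>G\<^esub> a) [^]\<^bsub>G Mod H\<^esub> n' = \<one>\<^bsub>G Mod H\<^esub>"
        using coset_pow_int[OF assms(2) a, of n'] n' coset_eq_self[OF assms(2) gc] assms(5) by simp
      then have "int m dvd n'" using GH.int_pow_eq_id[OF Ha] m_def by simp
      then obtain k' where k': "n' = int m * k'" by blast
      have bk': "b [^]\<^bsub>HH\<^esub> k' = g"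
      proof -
        have "b [^]\<^bsub>G\<^esub> k' = g"
          unfolding b_def using G.int_pow_pow[OF a, of "int m" k'] n' k' a
          by (metis int_pow_int)
        then show ?thesis unfolding HH_def using G.int_pow_consistent[OF NH.subgroup_axioms bH] by simp
      qed
      have gHH: "g [^]\<^bsub>HH\<^esub> (1::int) = g"
        using group.int_pow_1[OF HHg, of g] assms(5) HH_def by simp
      have one: "(1::ereal) \<le> nu HH L g" using gle[OF _ assms(5) gHH] by (simp add: one_ereal_def)
      show ?thesis
      proof (cases "k' = 0")
        case True
        have "nu G K g = 0" using n'(1) k' True by (simp add: zero_ereal_def)
        then have "nu G K g / ord_e (G Mod H) (H #>\<^bsub>G\<^esub> a) = 0" using ordm by simp
        moreover have "(0::ereal) \<le> 1" by simp
        then have "0 \<le> nu HH L g" using one by (rule order.trans)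
        ultimately show ?thesis by simp
      next
        case False
        have "nu G K g / ord_e (G Mod H) (H #>\<^bsub>G\<^esub> a) = ereal (real_of_int k')"
          using n'(1)[symmetric] k' ordm m1 by simp
        then show ?thesis using gle[OF False bH bk'] by simp
      qed
    qed
    then show ?thesis unfolding HH_def L_def by simp
  qed
qed

end
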